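(* Let $m$ be a positive integer and $n$ an integer with $\frac{3^{m-1}+1}{2}\le n\le\frac{3^m-1}{2}$ (so feasible partitions of $n$ have $m$ parts). (a) If $\frac{3^{m-1}+1}{2}\le n\le \frac{3^{m-1}+1}{2}+3^{m-2}$, then the smallest and largest values of $R_{m-1}$ over all feasible partitions of $n$ are $\left\lceil\frac{n-1}{3}\right\rceil$ and $\left\lfloor\frac{2n+3^{m-2}-1}{4}\right\rfloor$, respectively; that is, the range of $R_{m-1}$ is $\left\lceil\frac{n-1}{3}\right\rceil\le R_{m-1}\le\left\lfloor\frac{2n+3^{m-2}-1}{4}\right\rfloor$. (b) If $\frac{3^{m-1}+1}{2}+3^{m-2}+1\le n\le\frac{3^m-1}{2}$, then the range of $R_{m-1}$ over all feasible partitions of $n$ is $\left\lceil\frac{n-1}{3}\right\rceil\le R_{m-1}\le\frac{3^{m-1}-1}{2}$, with both bounds attained.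
   Context: A weighing partition of a positive integer $n$ is a multiset of positive integers summing to $n$ such that every integer $\ell$ with $1\le\ell\le n$ is a sum $\sum_j u_jw_j$ with $u_j\in\{-1,0,1\}$. A feasible partition of $n$ is a weighing partition of $n$ whose number of parts $m$ is minimal among all weighing partitions of $n$, written $w_1\le\dots\le w_m$. For such a partition, $R_i=w_1+\dots+w_i$ with $R_0=0$; in particular $R_{m-1}=n-w_m$. *)

theory Defs
  imports Complex_Main "HOL-Library.Multiset"
begin

text \<open>A weighing partition of n: a multiset of positive integers summing to n such that
every l with 1 \<le> l \<le> n is a signed sum \<Sum> u_j w_j with u_j in {-1,0,1}.
Choosing the coefficients is the same as choosing disjoint sub-multisets A (u_j = 1)
and B (u_j = -1) of P, i.e. A + B \<subseteq># P.\<close>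
definition weighing_partition :: "nat \<Rightarrow> nat multiset \<Rightarrow> bool" where
  "weighing_partition n P \<longleftrightarrow>
     (\<forall>x\<in>#P. 0 < x) \<and> sum_mset P = n \<and>
     (\<forall>l\<in>{1..n}. \<exists>A B. A + B \<subseteq># P \<and> int l = int (sum_mset A) - int (sum_mset B))"

definition feasible_partition :: "nat \<Rightarrow> nat multiset \<Rightarrow> bool" where
  "feasible_partition n P \<longleftrightarrow> weighing_partition n P \<and>
     (\<forall>Q. weighing_partition n Q \<longrightarrow> size P \<le> size Q)"

text \<open>R_{m-1} = w_1 + ... + w_{m-1} = n - w_m, where w_m is the largest part.\<close>
definition R_last :: "nat \<Rightarrow> nat multiset \<Rightarrow> nat" where
  "R_last n P = n - Max_mset P"

end

theory Submission
  imports Defs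
begin


definition wgood :: "nat multiset \<Rightarrow> bool" where
  "wgood P \<longleftrightarrow> (\<forall>x\<in>#P. 0 < x \<and> x \<le> 2 * sum_mset (filter_mset (\<lambda>y. y < x) P) + 1)"

lemma elem_le_sum: "(y::nat) \<in># M \<Longrightarrow> y \<le> sum_mset M"
  by (metis sum_mset.remove le_add1)

lemma sub_sum_le: "(A::nat multiset) \<subseteq># B \<Longrightarrow> sum_mset A \<le> sum_mset B"
  by (metis le_add1 subset_mset.add_diff_inverse sum_mset.union)

lemma sum_filter_le: "sum_mset (filter_mset f (M::nat multiset)) \<le> sum_mset M"
  by (rule sub_sum_le) simp

lemma wgood_add_max:
  assumes g: "wgood P" and le: "\<forall>y\<in>#P. y \<le> x" and x0: "0 < x" and xb: "x \<le> 2 * sum_mset P + 1"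
  shows "wgood (add_mset x P)"
  unfolding wgood_def
proof
  fix z assume z: "z \<in># add_mset x P"
  show "0 < z \<and> z \<le> 2 * sum_mset (filter_mset (\<lambda>y. y < z) (add_mset x P)) + 1"
  proof (cases "z \<in># P")
    case True
    then have "z \<le> x" using le by auto
    then have "filter_mset (\<lambda>y. y < z) (add_mset x P) = filter_mset (\<lambda>y. y < z) P" by auto
    then show ?thesis using g True unfolding wgood_def by auto
  next
    case False
    then have zx: "z = x" using z by auto
    have "\<forall>y\<in>#P. y < x" using le False zx by (metis le_neq_implies_less)
    then have "filter_mset (\<lambda>y. y < x) P = P"
      by (simp add: filter_mset_eq_conv)
    then show ?thesis using zx x0 xb by simp
  qed
qed

lemma wgood_add_one:
  assumes g: "wgood P" shows "wgood (add_mset 1 P)"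
  unfolding wgood_def
proof
  fix z assume z: "z \<in># add_mset 1 P"
  show "0 < z \<and> z \<le> 2 * sum_mset (filter_mset (\<lambda>y. y < z) (add_mset 1 P)) + 1"
  proof (cases "z \<in># P")
    case True
    have "sum_mset (filter_mset (\<lambda>y. y < z) P) \<le> sum_mset (filter_mset (\<lambda>y. y < z) (add_mset 1 P))"
      by (cases "1 < z") auto
    then show ?thesis using g True unfolding wgood_def by force
  next
    case False
    then show ?thesis using z by auto
  qed
qed

lemma wgood_remove_max:
  assumes g: "wgood (add_mset x P)" and le: "\<forall>y\<in>#P. y \<le> x"
  shows "wgood P \<and> 0 < x \<and> x \<le> 2 * sum_mset P + 1"
proof -
  have "wgood P" unfolding wgood_def
  proof
    fix z assume z: "z \<in># P"
    then have "z \<le> x" using le by auto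
    then have "filter_mset (\<lambda>y. y < z) (add_mset x P) = filter_mset (\<lambda>y. y < z) P" by auto
    then show "0 < z \<and> z \<le> 2 * sum_mset (filter_mset (\<lambda>y. y < z) P) + 1"
      using g z unfolding wgood_def by (metis union_iff add_mset_add_single)
  qed
  moreover have "0 < x \<and> x \<le> 2 * sum_mset (filter_mset (\<lambda>y. y < x) (add_mset x P)) + 1"
    using g unfolding wgood_def by auto
  moreover have "sum_mset (filter_mset (\<lambda>y. y < x) (add_mset x P)) \<le> sum_mset P"
    using sum_filter_le[of "\<lambda>y. y < x" P] by simp
  ultimately show ?thesis by linarith
qed

lemma wgood_bound: "wgood P \<Longrightarrow> 2 * sum_mset P + 1 \<le> 3 ^ size P"
proof (induction P rule: multiset_induct_max)
  case empty then show ?case by simp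
next
  case (add x M)
  from wgood_remove_max[OF add.prems add.hyps] add.IH
  show ?case by simp
qed

lemma wgood_repr: "wgood P \<Longrightarrow> l \<le> sum_mset P \<Longrightarrow>
  \<exists>A B. A + B \<subseteq># P \<and> int l = int (sum_mset A) - int (sum_mset B)"
proof (induction P arbitrary: l rule: multiset_induct_max)
  case empty then show ?case by (intro exI[of _ "{#}"]) simp
next
  case (add x M)
  from wgood_remove_max[OF add.prems(1) add.hyps]
  have gM: "wgood M" and xb: "x \<le> 2 * sum_mset M + 1" by auto
  have sub: "M \<subseteq># add_mset x M" by simp
  show ?case
  proof (cases "l \<le> sum_mset M")
    case True
    then obtain A B where "A + B \<subseteq># M" "int l = int (sum_mset A) - int (sum_mset B)"
      using add.IH gM by blast
    then show ?thesis using sub by (meson subset_mset.order_trans)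
  next
    case False
    show ?thesis
    proof (cases "x \<le> l")
      case True
      have "l - x \<le> sum_mset M" using add.prems(2) by simp
      then obtain A B where AB: "A + B \<subseteq># M" "int (l - x) = int (sum_mset A) - int (sum_mset B)"
        using add.IH gM by blast
      show ?thesis
        apply (rule exI[of _ "add_mset x A"], rule exI[of _ B])
        using AB True by auto
    next
      case False
      have "x - l \<le> sum_mset M" using xb \<open>\<not> l \<le> sum_mset M\<close> by simp
      then obtain A B where AB: "A + B \<subseteq># M" "int (x - l) = int (sum_mset A) - int (sum_mset B)"
        using add.IH gM by blast
      have "add_mset x B + A \<subseteq># add_mset x M" using AB(1) by (simp add: add.commute)
      moreover have "int l = int (sum_mset (add_mset x B)) - int (sum_mset A)"
        using AB(2) False by simp
      ultimately show ?thesis by blast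
    qed
  qed
qed

lemma wgood_weighing: "wgood P \<Longrightarrow> weighing_partition (sum_mset P) P"
  unfolding weighing_partition_def using wgood_repr by (auto simp: wgood_def)



lemma weighing_wgood:
  assumes W: "weighing_partition n P" shows "wgood P"
  unfolding wgood_def
proof
  fix x assume xP: "x \<in># P"
  have pos: "0 < x" using W xP by (auto simp: weighing_partition_def)
  define Sm where "Sm = filter_mset (\<lambda>y. y < x) P"
  define Bg where "Bg = filter_mset (\<lambda>y. \<not> y < x) P"
  define R where "R = sum_mset Sm"
  define T where "T = sum_mset Bg"
  have Peq: "P = Sm + Bg" unfolding Sm_def Bg_def by (rule multiset_partition)
  have nRT: "n = R + T" using W Peq by (simp add: weighing_partition_def R_def T_def)
  have xBg: "x \<in># Bg" using xP by (simp add: Bg_def)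
  have xT: "x \<le> T" unfolding T_def by (rule elem_le_sum[OF xBg])
  show "0 < x \<and> x \<le> 2 * sum_mset (filter_mset (\<lambda>y. y < x) P) + 1"
  proof (rule ccontr)
    assume "\<not> ?thesis"
    then have big: "2 * R + 1 < x" using pos by (simp add: R_def Sm_def)
    define l where "l = T - R - 1"
    have l1: "1 \<le> l" "l \<le> n" using big xT nRT by (auto simp: l_def)
    obtain A B where AB: "A + B \<subseteq># P" "int l = int (sum_mset A) - int (sum_mset B)"
      using W l1 unfolding weighing_partition_def by (meson atLeastAtMost_iff)
    define A1 where "A1 = filter_mset (\<lambda>y. y < x) A"
    define A2 where "A2 = filter_mset (\<lambda>y. \<not> y < x) A"
    define B1 where "B1 = filter_mset (\<lambda>y. y < x) B"
    define B2 where "B2 = filter_mset (\<lambda>y. \<not> y < x) B"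
    have sA: "sum_mset A = sum_mset A1 + sum_mset A2"
      by (metis A1_def A2_def multiset_partition sum_mset.union)
    have sB: "sum_mset B = sum_mset B1 + sum_mset B2"
      by (metis B1_def B2_def multiset_partition sum_mset.union)
    have s1: "A1 + B1 \<subseteq># Sm" unfolding A1_def B1_def Sm_def
      using multiset_filter_mono[OF AB(1), of "\<lambda>y. y < x"] by simp
    have s2: "A2 + B2 \<subseteq># Bg" unfolding A2_def B2_def Bg_def
      using multiset_filter_mono[OF AB(1), of "\<lambda>y. \<not> y < x"] by simp
    have r1: "sum_mset A1 + sum_mset B1 \<le> R"
      using sub_sum_le[OF s1] by (simp add: R_def)
    have r2: "sum_mset A2 + sum_mset B2 \<le> T"
      using sub_sum_le[OF s2] by (simp add: T_def)
    show False
    proof (cases "B2 = {#} \<and> A2 = Bg")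
      case True
      then have "sum_mset A2 = T" "sum_mset B2 = 0" by (auto simp: T_def)
      then show False using AB(2) sA sB r1 big xT unfolding l_def by linarith
    next
      case False
      have key: "sum_mset A2 + x \<le> T"
      proof (cases "B2 = {#}")
        case False
        then obtain z where z: "z \<in># B2" by blast
        then have "\<not> z < x" by (simp add: B2_def)
        moreover have "z \<le> sum_mset B2" by (rule elem_le_sum[OF z])
        ultimately show ?thesis using r2 by linarith
      next
        case True
        with \<open>\<not> (B2 = {#} \<and> A2 = Bg)\<close> have ne: "A2 \<noteq> Bg" by simp
        have sub: "A2 \<subseteq># Bg" using s2 by (meson mset_subset_eq_add_left subset_mset.order_trans)
        define D where "D = Bg - A2"
        have BD: "Bg = A2 + D" using sub by (simp add: D_def)
        have "D \<noteq> {#}" using BD ne by auto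
        then obtain z where z: "z \<in># D" by blast
        then have "z \<in># Bg" using BD by simp
        then have "\<not> z < x" by (simp add: Bg_def)
        moreover have "z \<le> sum_mset D" by (rule elem_le_sum[OF z])
        moreover have "T = sum_mset A2 + sum_mset D" using BD by (simp add: T_def)
        ultimately show ?thesis by linarith
      qed
      show False using AB(2) sA sB r1 key big xT unfolding l_def by linarith
    qed
  qed
qed

lemma pow3_ge: "2 * k + 1 \<le> (3::nat) ^ k"
  by (induction k) auto

lemma pow3_ge2: "4 * k \<le> (3::nat) ^ k + 1"
proof (induction k)
  case 0 then show ?case by simp
next
  case (Suc k)
  then show ?case using pow3_ge[of k] by (cases k) auto
qed

lemma construct: "k \<le> R \<Longrightarrow> 2 * R + 1 \<le> (3::nat) ^ k \<Longrightarrow>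
  \<exists>P. wgood P \<and> size P = k \<and> sum_mset P = R"
proof (induction k arbitrary: R)
  case 0
  then show ?case by (intro exI[of _ "{#}"]) (simp add: wgood_def)
next
  case (Suc k)
  obtain b where b: "(3::nat) ^ k = 2 * b + 1"
  proof -
    have "odd ((3::nat) ^ k)" by simp
    then show ?thesis using that by (metis oddE)
  qed
  have kb: "k \<le> b" using pow3_ge[of k] b by simp
  have k0: "k = 0 \<longrightarrow> b = 0" using b by auto
  show ?case
  proof (cases "R \<le> 2 * k")
    case True
    have "2 * (R - 1) + 1 \<le> 3 ^ k" using True pow3_ge2[of k] Suc.prems(1) by linarith
    moreover have "k \<le> R - 1" using Suc.prems by simp
    ultimately obtain P where P: "wgood P" "size P = k" "sum_mset P = R - 1"
      using Suc.IH by blast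
    show ?thesis
      apply (rule exI[of _ "add_mset 1 P"])
      using P wgood_add_one Suc.prems by auto
  next
    case False
    define R' where "R' = max k ((R + 1) div 3)"
    have c: "k \<le> R'" "2 * R' + 1 \<le> 3 ^ k" "R' < R - R'" "R - R' \<le> 2 * R' + 1"
    proof -
      define q where "q = (R + 1) div 3"
      have q: "3 * q \<le> R + 1" "R + 1 < 3 * q + 3" unfolding q_def by auto
      have R2: "2 * R + 1 \<le> 3 * (2 * b + 1)" using Suc.prems(2) b by simp
      show "k \<le> R'" unfolding R'_def by simp
      show "2 * R' + 1 \<le> 3 ^ k"
        unfolding R'_def q_def[symmetric] b using q R2 False kb k0 by (cases "k = 0"; cases "k \<le> q"; simp add: max_def; arith)
      show "R' < R - R'"
        unfolding R'_def q_def[symmetric] using q R2 False kb k0 by (cases "k = 0"; cases "k \<le> q"; simp add: max_def; arith)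
      show "R - R' \<le> 2 * R' + 1"
        unfolding R'_def q_def[symmetric] using q R2 False kb k0 by (cases "k = 0"; cases "k \<le> q"; simp add: max_def; arith)
    qed
    obtain P where P: "wgood P" "size P = k" "sum_mset P = R'"
      using Suc.IH c(1,2) by blast
    have "\<forall>y\<in>#P. y \<le> R - R'" using elem_le_sum P(3) c(3) by fastforce
    then have "wgood (add_mset (R - R') P)"
      using wgood_add_max[OF P(1)] c P(3) by auto
    then show ?thesis using P c by (intro exI[of _ "add_mset (R - R') P"]) auto
  qed
qed



lemma pow3_ge3: "6 * j \<le> (3::nat) ^ j + 3"
proof (induction j)
  case 0 then show ?case by simp
next
  case (Suc j)
  then show ?case by (cases j) auto
qed

lemma max_add: "\<forall>y\<in>#P. y \<le> (x::nat) \<Longrightarrow> Max_mset (add_mset x P) = x"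
  by (intro Max_eqI) auto

lemma decomp: "(P::nat multiset) \<noteq> {#} \<Longrightarrow> \<exists>x P'. P = add_mset x P' \<and> (\<forall>y\<in>#P'. y \<le> x)"
  apply (rule exI[of _ "Max_mset P"], rule exI[of _ "P - {#Max_mset P#}"])
  by (auto dest: in_diffD)

lemma lower_exists:
  assumes m: "0 < m" and lo: "3^(m-1) + 1 \<le> 2*n" and hi: "2*n + 1 \<le> 3^m"
  shows "\<exists>P. wgood P \<and> sum_mset P = n \<and> size P = m \<and> Max_mset P = n - (n+1) div 3"
proof -
  obtain c where c: "(3::nat) ^ (m-1) = 2 * c + 1"
  proof -
    have "odd ((3::nat) ^ (m-1))" by simp
    then show ?thesis using that by (metis oddE)
  qed
  have T3: "(3::nat)^m = 3 * 3^(m-1)" using m by (cases m) auto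
  define R0 where "R0 = (n+1) div 3"
  have q: "3 * R0 \<le> n + 1" "n + 1 < 3 * R0 + 3" unfolding R0_def by auto
  have h6: "6 * (m-1) \<le> 2 * c + 1 + 3" using pow3_ge3[of "m-1"] c by simp
  have k: "m - 1 \<le> R0" using q h6 lo c by linarith
  have "n \<le> 3 * c + 1" using hi T3 c by linarith
  then have "R0 \<le> c" using q by linarith
  then have k2: "2 * R0 + 1 \<le> 3 ^ (m-1)" using c by linarith
  obtain P0 where P0: "wgood P0" "size P0 = m - 1" "sum_mset P0 = R0"
    using construct[OF k k2] by blast
  have n1: "1 \<le> n" using lo by simp
  have RR: "R0 \<le> n - R0" using q n1 by linarith
  have le: "\<forall>y\<in>#P0. y \<le> n - R0" using elem_le_sum P0(3) RR by fastforce
  have xpos: "0 < n - R0" "n - R0 \<le> 2 * sum_mset P0 + 1" using q n1 P0(3) by linarith+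
  have "wgood (add_mset (n - R0) P0)" using wgood_add_max[OF P0(1) le xpos] .
  moreover have "Max_mset (add_mset (n - R0) P0) = n - R0" using max_add[OF le] .
  moreover have "n - R0 + R0 = n" using RR by linarith
  ultimately show ?thesis using P0 m unfolding R0_def[symmetric]
    by (intro exI[of _ "add_mset (n - R0) P0"]) auto
qed

lemma weighing_size:
  assumes m: "0 < m" and lo: "3^(m-1) + 1 \<le> 2*n" and W: "weighing_partition n Q"
  shows "m \<le> size Q"
proof (rule ccontr)
  assume "\<not> m \<le> size Q"
  then have "size Q \<le> m - 1" by simp
  then have "(3::nat) ^ size Q \<le> 3 ^ (m-1)" by (rule power_increasing) simp
  moreover have "2 * sum_mset Q + 1 \<le> 3 ^ size Q" using wgood_bound[OF weighing_wgood[OF W]] .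
  moreover have "sum_mset Q = n" using W by (simp add: weighing_partition_def)
  ultimately show False using lo by linarith
qed

lemma feas_iff:
  assumes m: "0 < m" and lo: "3^(m-1) + 1 \<le> 2*n" and hi: "2*n + 1 \<le> 3^m"
  shows "feasible_partition n P \<longleftrightarrow> wgood P \<and> sum_mset P = n \<and> size P = m"
proof
  assume F: "feasible_partition n P"
  obtain P0 where P0: "wgood P0" "sum_mset P0 = n" "size P0 = m"
    using lower_exists[OF m lo hi] by blast
  have W0: "weighing_partition n P0" using wgood_weighing[OF P0(1)] P0(2) by simp
  have W: "weighing_partition n P" using F by (simp add: feasible_partition_def)
  have "size P \<le> m" using F W0 P0(3) by (auto simp: feasible_partition_def)
  moreover have "m \<le> size P" by (rule weighing_size[OF m lo W])
  ultimately show "wgood P \<and> sum_mset P = n \<and> size P = m"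
    using weighing_wgood[OF W] W by (auto simp: weighing_partition_def)
next
  assume A: "wgood P \<and> sum_mset P = n \<and> size P = m"
  then have W: "weighing_partition n P" using wgood_weighing by blast
  show "feasible_partition n P" unfolding feasible_partition_def
    using W A weighing_size[OF m lo] by auto
qed

lemma build3:
  assumes P2: "wgood P2" "sum_mset P2 = a" and ay: "a \<le> y" "y \<le> 2*a+1" "0 < y"
    and yx: "y \<le> x" "x \<le> 2*(a+y)+1"
  shows "wgood (add_mset x (add_mset y P2)) \<and> sum_mset (add_mset x (add_mset y P2)) = x + y + a
     \<and> size (add_mset x (add_mset y P2)) = size P2 + 2 \<and> Max_mset (add_mset x (add_mset y P2)) = x"
proof -
  have le: "\<forall>z\<in>#P2. z \<le> y" using elem_le_sum P2(2) ay(1) by fastforce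
  have g1: "wgood (add_mset y P2)" using wgood_add_max[OF P2(1) le] ay P2(2) by simp
  have le2: "\<forall>z\<in>#add_mset y P2. z \<le> x" using le yx by auto
  have g2: "wgood (add_mset x (add_mset y P2))" using wgood_add_max[OF g1 le2] yx ay P2(2) by simp
  show ?thesis using g2 max_add[OF le2] P2(2) by simp
qed

lemma feas_struct:
  assumes g: "wgood P" and s: "size P = m" and m: "0 < m"
  shows "\<exists>x P'. P = add_mset x P' \<and> (\<forall>y\<in>#P'. y \<le> x) \<and> x \<le> 2 * sum_mset P' + 1
      \<and> 2 * sum_mset P' + 1 \<le> 3^(m-1) \<and> Max_mset P = x \<and>
      (2 \<le> m \<longrightarrow> (\<exists>y P''. P' = add_mset y P'' \<and> y \<le> x \<and> 2 * sum_mset P'' + 1 \<le> 3^(m-2)))"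
proof -
  have "P \<noteq> {#}" using s m by auto
  then obtain x P' where d: "P = add_mset x P'" "\<forall>y\<in>#P'. y \<le> x" using decomp by blast
  from wgood_remove_max[OF g[unfolded d(1)] d(2)]
  have g': "wgood P'" "x \<le> 2 * sum_mset P' + 1" by auto
  have sP': "size P' = m - 1" using s d(1) by simp
  have b1: "2 * sum_mset P' + 1 \<le> 3^(m-1)" using wgood_bound[OF g'(1)] sP' by simp
  have mx: "Max_mset P = x" using d max_add by simp
  have "2 \<le> m \<longrightarrow> (\<exists>y P''. P' = add_mset y P'' \<and> y \<le> x \<and> 2 * sum_mset P'' + 1 \<le> 3^(m-2))"
  proof
    assume "2 \<le> m"
    then have "P' \<noteq> {#}" using sP' by auto
    then obtain y P'' where d2: "P' = add_mset y P''" "\<forall>z\<in>#P''. z \<le> y" using decomp by blast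
    from wgood_remove_max[OF g'(1)[unfolded d2(1)] d2(2)]
    have "wgood P''" by auto
    moreover have "size P'' = m - 2" using sP' d2(1) by simp
    ultimately have "2 * sum_mset P'' + 1 \<le> 3^(m-2)" using wgood_bound by metis
    moreover have "y \<le> x" using d(2) d2(1) by simp
    ultimately show "\<exists>y P''. P' = add_mset y P'' \<and> y \<le> x \<and> 2 * sum_mset P'' + 1 \<le> 3^(m-2)"
      using d2(1) by blast
  qed
  then show ?thesis using d g' b1 mx by blast
qed



theorem theorem5:
  fixes m n :: nat
  assumes m: "0 < m"
    and lo: "((3::real) ^ (m - 1) + 1) / 2 \<le> real n"
    and hi: "real n \<le> ((3::real) ^ m - 1) / 2"
  shows "(real n \<le> ((3::real) ^ (m - 1) + 1) / 2 + (3::real) powi (int m - 2) \<longrightarrow>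
           (\<forall>P. feasible_partition n P \<longrightarrow>
               real (R_last n P) \<ge> of_int \<lceil>(real n - 1) / 3\<rceil> \<and>
               real (R_last n P) \<le> of_int \<lfloor>(2 * real n + (3::real) powi (int m - 2) - 1) / 4\<rfloor>) \<and>
           (\<exists>P. feasible_partition n P \<and>
               real (R_last n P) = of_int \<lceil>(real n - 1) / 3\<rceil>) \<and>
           (\<exists>P. feasible_partition n P \<and>
               real (R_last n P) = of_int \<lfloor>(2 * real n + (3::real) powi (int m - 2) - 1) / 4\<rfloor>))
       \<and> (((3::real) ^ (m - 1) + 1) / 2 + (3::real) powi (int m - 2) + 1 \<le> real n \<longrightarrow>
           (\<forall>P. feasible_partition n P \<longrightarrow>
               real (R_last n P) \<ge> of_int \<lceil>(real n - 1) / 3\<rceil> \<and>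
               real (R_last n P) \<le> ((3::real) ^ (m - 1) - 1) / 2) \<and>
           (\<exists>P. feasible_partition n P \<and>
               real (R_last n P) = of_int \<lceil>(real n - 1) / 3\<rceil>) \<and>
           (\<exists>P. feasible_partition n P \<and>
               real (R_last n P) = ((3::real) ^ (m - 1) - 1) / 2))"
proof -
  define T where "T = (3::nat)^(m-1)"
  have T3: "(3::nat)^m = 3*T" unfolding T_def using m by (cases m) auto
  have rT: "(3::real)^(m-1) = real T" by (simp add: T_def)
  have rT3: "(3::real)^m = 3 * real T" using T3 by (metis of_nat_numeral of_nat_power of_nat_mult)
  have "real (T + 1) \<le> real (2*n)" using lo unfolding rT by simp
  then have lo': "T + 1 \<le> 2*n" by (simp only: of_nat_le_iff)
  have "real (2*n + 1) \<le> real (3*T)" using hi unfolding rT3 by simp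
  then have hi': "2*n + 1 \<le> 3*T" by (simp only: of_nat_le_iff)
  have lo'': "3^(m-1) + 1 \<le> 2*n" using lo' T_def by simp
  have hi'': "2*n + 1 \<le> 3^m" using hi' T3 by simp
  note F = feas_iff[OF m lo'' hi'']
  obtain Pl where Pl: "wgood Pl" "sum_mset Pl = n" "size Pl = m" "Max_mset Pl = n - (n+1) div 3"
    using lower_exists[OF m lo'' hi''] by blast
  have n1: "1 \<le> n" using lo' by simp
  have RPl: "R_last n Pl = (n+1) div 3" using Pl(4) n1 by (simp add: R_last_def)
  have feasPl: "feasible_partition n Pl" using F Pl by blast
  have univ: "(n+1) div 3 \<le> R_last n P \<and> 2 * R_last n P + 1 \<le> T \<and>
       (2 \<le> m \<longrightarrow> 4 * R_last n P + 1 \<le> 2*n + 3^(m-2))" if fP: "feasible_partition n P" for P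
  proof -
    have g: "wgood P" "sum_mset P = n" "size P = m" using F fP by auto
    obtain x P' where st: "P = add_mset x P'" "x \<le> 2 * sum_mset P' + 1"
      "2 * sum_mset P' + 1 \<le> 3^(m-1)" "Max_mset P = x"
      "2 \<le> m \<longrightarrow> (\<exists>y P''. P' = add_mset y P'' \<and> y \<le> x \<and> 2 * sum_mset P'' + 1 \<le> 3^(m-2))"
      using feas_struct[OF g(1) g(3) m] by blast
    have nx: "n = x + sum_mset P'" using g(2) st(1) by simp
    have R: "R_last n P = sum_mset P'" using st(4) nx by (simp add: R_last_def)
    have "2 \<le> m \<longrightarrow> 4 * R_last n P + 1 \<le> 2*n + 3^(m-2)"
    proof
      assume "2 \<le> m"
      then obtain y P'' where "P' = add_mset y P''" "y \<le> x" "2 * sum_mset P'' + 1 \<le> 3^(m-2)"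
        using st(5) by blast
      then show "4 * R_last n P + 1 \<le> 2*n + 3^(m-2)" using R nx by simp
    qed
    moreover have "(n+1) div 3 \<le> R_last n P" using R nx st(2) by linarith
    ultimately show ?thesis using R st(3) T_def by simp
  qed
  show ?thesis
  proof (cases "m = 1")
    case True
    have T1: "T = 1" using True T_def by simp
    have nn: "n = 1" using lo' hi' T1 by simp
    have pw: "(3::real) powi (int m - 2) = 1/3" using True by (simp add: power_int_minus_divide)
    have R0: "R_last n P = 0" if "feasible_partition n P" for P using univ[OF that] T1 by simp
    have c0: "\<lceil>(real n - 1) / 3\<rceil> = 0" using nn by simp
    have f0: "\<lfloor>(2 * real n + (3::real) powi (int m - 2) - 1) / 4\<rfloor> = 0"
      unfolding pw nn by (rule floor_unique) simp_all
    have nb: "\<not> (((3::real) ^ (m - 1) + 1) / 2 + (3::real) powi (int m - 2) + 1 \<le> real n)"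
      unfolding pw using True nn by simp
    show ?thesis unfolding c0 f0 using R0 feasPl RPl nn nb by auto
  next
    case False
    then have m2: "2 \<le> m" using m by simp
    define U where "U = (3::nat)^(m-2)"
    have TU: "T = 3 * U"
    proof -
      have "m - 1 = Suc (m - 2)" using m2 by simp
      then show ?thesis unfolding T_def U_def by simp
    qed
    obtain a where a: "U = 2 * a + 1"
    proof -
      have "odd U" by (simp add: U_def)
      then show ?thesis using that by (metis oddE)
    qed
    have pw: "(3::real) powi (int m - 2) = 2 * real a + 1"
    proof -
      have "int m - 2 = int (m - 2)" using m2 by simp
      then have "(3::real) powi (int m - 2) = 3 powi (int (m-2))" by (simp only:)
      also have "\<dots> = 3 ^ (m-2)" by (rule power_int_of_nat)
      also have "\<dots> = real U" by (simp add: U_def)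
      finally show ?thesis using a by simp
    qed
    have e1: "(3::real)^(m-1) = 6 * real a + 3"
    proof -
      have "(3::real)^(m-1) = real (3 * (2 * a + 1))" unfolding rT TU a ..
      then show ?thesis by simp
    qed
    have n_lo: "3*a + 2 \<le> n" using lo' unfolding TU a by arith
    have n_hi: "n \<le> 9*a + 4" using hi' unfolding TU a by arith
    have ceq: "\<lceil>(real n - 1) / 3\<rceil> = int ((n+1) div 3)"
    proof (rule ceiling_unique)
      define q where "q = (n+1) div 3"
      have q: "3 * q \<le> n + 1" "n + 1 < 3 * q + 3" unfolding q_def by auto
      have q2: "n \<le> 3 * q + 1" using q by linarith
      have q1: "real (3 * q) \<le> real (n + 1)" "real n \<le> real (3 * q + 1)"
        using q(1) q2 by (simp_all only: of_nat_le_iff)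
      show "real_of_int (int ((n + 1) div 3)) - 1 < (real n - 1) / 3"
        using q1 unfolding q_def[symmetric] by simp
      show "(real n - 1) / 3 \<le> real_of_int (int ((n + 1) div 3))"
        using q1 unfolding q_def[symmetric] by simp
    qed
    have feq: "\<lfloor>(2 * real n + (2 * real a + 1) - 1) / 4\<rfloor> = int ((n+a) div 2)"
    proof -
      have "(2 * real n + (2 * real a + 1) - 1) / 4 = real (n + a) / real (2::nat)" by simp
      then show ?thesis by (simp only: floor_divide_of_nat_eq)
    qed
    have e3: "(6 * real a + 3 - 1) / 2 = real (3*a+1)" by simp
    have cA: "(real n \<le> (6 * real a + 3 + 1) / 2 + (2 * real a + 1)) = (n \<le> 5*a+3)"
    proof -
      have "(6 * real a + 3 + 1) / 2 + (2 * real a + 1) = real (5*a+3)" by simp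
      then show ?thesis by (simp only: of_nat_le_iff)
    qed
    have cB: "((6 * real a + 3 + 1) / 2 + (2 * real a + 1) + 1 \<le> real n) = (5*a+4 \<le> n)"
    proof -
      have "(6 * real a + 3 + 1) / 2 + (2 * real a + 1) + 1 = real (5*a+4)" by simp
      then show ?thesis by (simp only: of_nat_le_iff)
    qed
    have univ2: "(n+1) div 3 \<le> R_last n P \<and> R_last n P \<le> 3*a+1 \<and> R_last n P \<le> (n+a) div 2"
      if "feasible_partition n P" for P
      using univ[OF that] m2 TU a U_def by auto
    obtain P2 where P2: "wgood P2" "size P2 = m - 2" "sum_mset P2 = a"
    proof -
      have "2 * (m-2) + 1 \<le> 2*a+1" using pow3_ge[of "m-2"] a U_def by simp
      then have "m - 2 \<le> a" by simp
      moreover have "2 * a + 1 \<le> 3^(m-2)" using a U_def by simp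
      ultimately show ?thesis using construct that by blast
    qed
    have szP: "size P2 + 2 = m" using P2 m2 by simp
    have exA: "\<exists>P. feasible_partition n P \<and> R_last n P = (n+a) div 2" if "n \<le> 5*a+3"
    proof -
      define R1 where "R1 = (n+a) div 2"
      have r: "2 * R1 \<le> n + a" "n + a \<le> 2 * R1 + 1" unfolding R1_def by auto
      have r3: "n \<le> 3 * R1 + 1" "a \<le> R1" using r n_lo by linarith+
      have "a + (R1 - a) = R1" using r3 by simp
      note ff = this r n_lo that r3
      have h0: "a \<le> R1 - a" using ff by linarith
      have h1: "R1 - a \<le> 2*a+1" using ff by linarith
      have h2: "0 < R1 - a" using ff by linarith
      have h3: "R1 - a \<le> n - R1" using ff by linarith
      have h4: "n - R1 \<le> 2*(a+(R1 - a))+1" unfolding ff(1) using ff by linarith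
      note h = h0 h1 h2 h3 h4
      have b: "wgood (add_mset (n - R1) (add_mset (R1 - a) P2)) \<and>
        sum_mset (add_mset (n - R1) (add_mset (R1 - a) P2)) = (n - R1) + (R1 - a) + a \<and>
        size (add_mset (n - R1) (add_mset (R1 - a) P2)) = size P2 + 2 \<and>
        Max_mset (add_mset (n - R1) (add_mset (R1 - a) P2)) = n - R1"
        by (rule build3[OF P2(1) P2(3) h])
      have "n - R1 + (R1 - a) + a = n" using r n_lo by linarith
      moreover have "n - (n - R1) = R1" using r n_lo by linarith
      ultimately show ?thesis using b F szP unfolding R1_def[symmetric]
        by (intro exI[of _ "add_mset (n - R1) (add_mset (R1 - a) P2)"]) (auto simp: R_last_def)
    qed
    have exB: "\<exists>P. feasible_partition n P \<and> R_last n P = 3*a+1" if "5*a+4 \<le> n"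
    proof -
      have h0: "a \<le> 2*a+1" using n_hi that by linarith
      have h1: "2*a+1 \<le> 2*a+1" using n_hi that by linarith
      have h2: "0 < 2*a+1" using n_hi that by linarith
      have h3: "2*a+1 \<le> n - (3*a+1)" using n_hi that by linarith
      have h4: "n - (3*a+1) \<le> 2*(a+(2*a+1))+1" using n_hi that by simp
      note h = h0 h1 h2 h3 h4
      have b: "wgood (add_mset (n - (3*a+1)) (add_mset (2*a+1) P2)) \<and>
        sum_mset (add_mset (n - (3*a+1)) (add_mset (2*a+1) P2)) = (n - (3*a+1)) + (2*a+1) + a \<and>
        size (add_mset (n - (3*a+1)) (add_mset (2*a+1) P2)) = size P2 + 2 \<and>
        Max_mset (add_mset (n - (3*a+1)) (add_mset (2*a+1) P2)) = n - (3*a+1)"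
        by (rule build3[OF P2(1) P2(3) h])
      have "n - (3*a+1) + (2*a+1) + a = n" using that by linarith
      moreover have "n - (n - (3*a+1)) = 3*a+1" using that by linarith
      ultimately show ?thesis using b F szP
        by (intro exI[of _ "add_mset (n - (3*a+1)) (add_mset (2*a+1) P2)"]) (auto simp: R_last_def)
    qed
    have U1: "\<And>P. feasible_partition n P \<Longrightarrow> real ((n + 1) div 3) \<le> real (R_last n P)"
      using univ2 by simp
    have U2: "\<And>P. feasible_partition n P \<Longrightarrow> real (R_last n P) \<le> real ((n + a) div 2)"
      using univ2 by simp
    have U3: "\<And>P. feasible_partition n P \<Longrightarrow> real (R_last n P) \<le> real (3*a+1)"
      using univ2 by (simp only: of_nat_le_iff)
    have E1: "\<exists>P. feasible_partition n P \<and> real (R_last n P) = real ((n + 1) div 3)"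
      using feasPl RPl by auto
    have E2: "n \<le> 5*a+3 \<Longrightarrow> \<exists>P. feasible_partition n P \<and> real (R_last n P) = real ((n + a) div 2)"
      using exA by auto
    have E3: "5*a+4 \<le> n \<Longrightarrow> \<exists>P. feasible_partition n P \<and> real (R_last n P) = real (3*a+1)"
      using exB by (metis of_nat_eq_iff)
    show ?thesis unfolding pw e1 ceq feq e3 cA cB of_int_of_nat_eq
      using U1 U2 U3 E1 E2 E3 by blast
  qed
qed

end
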